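(* Let $M$ be a module over a commutative ring $A$, and let $A\oplus M$ be the idealization of $M$. Then $\mathfrak{C}(A,A\oplus M)=0$, where $A$ is regarded as a subring of $A\oplus M$ via $a\mapsto(a,0)$.
   Context: The idealization $A\oplus M$ is the ring with underlying group $A\oplus M$ and multiplication $(a,m)(a',m')=(aa',am'+a'm)$. For an extension of rings $A\subseteq B$ and $A$-submodules $L,L'$ of $B$, $LL'$ is the $A$-submodule of finite sums $\sum x_ky_k$. An $A$-submodule $L$ of $B$ is an invertible ideal of $A\subseteq B$ if $LL'=A$ for some $A$-submodule $L'$ of $B$; these form an abelian group $\mathscr{G}(A,B)$ and $\mathfrak{C}(A,B)=\mathscr{G}(A,B)/\{Ax: x\in B^\ast\}$. *)

theory Defs
  imports Main "HOL.Modules"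
begin

text \<open>Idealization A (+) M of an A-module M (scalar multiplication scale),
  with carrier 'a \<times> 'b. Addition is componentwise.\<close>

definition idz_add :: "'a::comm_ring_1 \<times> 'b::ab_group_add \<Rightarrow> 'a \<times> 'b \<Rightarrow> 'a \<times> 'b" where
  "idz_add x y = (fst x + fst y, snd x + snd y)"

definition idz_zero :: "'a::comm_ring_1 \<times> 'b::ab_group_add" where
  "idz_zero = (0, 0)"

definition idz_one :: "'a::comm_ring_1 \<times> 'b::ab_group_add" where
  "idz_one = (1, 0)"

definition idz_mult :: "('a::comm_ring_1 \<Rightarrow> 'b::ab_group_add \<Rightarrow> 'b)
    \<Rightarrow> 'a \<times> 'b \<Rightarrow> 'a \<times> 'b \<Rightarrow> 'a \<times> 'b" where
  "idz_mult scale x y = (fst x * fst y, scale (fst x) (snd y) + scale (fst y) (snd x))"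

definition idz_sum :: "(nat \<Rightarrow> 'a::comm_ring_1 \<times> 'b::ab_group_add) \<Rightarrow> nat \<Rightarrow> 'a \<times> 'b" where
  "idz_sum f n = ((\<Sum>i<n. fst (f i)), (\<Sum>i<n. snd (f i)))"

definition idz_unit :: "('a::comm_ring_1 \<Rightarrow> 'b::ab_group_add \<Rightarrow> 'b) \<Rightarrow> 'a \<times> 'b \<Rightarrow> bool" where
  "idz_unit scale x \<longleftrightarrow> (\<exists>y. idz_mult scale x y = idz_one)"

definition idz_base :: "('a::comm_ring_1 \<times> 'b::ab_group_add) set" where
  "idz_base = {(a, 0) | a. True}"

definition idz_submodule :: "('a::comm_ring_1 \<Rightarrow> 'b::ab_group_add \<Rightarrow> 'b) \<Rightarrow> ('a \<times> 'b) set \<Rightarrow> bool" where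
  "idz_submodule scale L \<longleftrightarrow>
     idz_zero \<in> L \<and>
     (\<forall>x\<in>L. \<forall>y\<in>L. idz_add x y \<in> L) \<and>
     (\<forall>a. \<forall>x\<in>L. idz_mult scale (a, 0) x \<in> L)"

definition idz_prod :: "('a::comm_ring_1 \<Rightarrow> 'b::ab_group_add \<Rightarrow> 'b)
    \<Rightarrow> ('a \<times> 'b) set \<Rightarrow> ('a \<times> 'b) set \<Rightarrow> ('a \<times> 'b) set" where
  "idz_prod scale L L' = {z. \<exists>n f g. (\<forall>i<n. f i \<in> L \<and> g i \<in> L') \<and>
       z = idz_sum (\<lambda>i. idz_mult scale (f i) (g i)) n}"

definition idz_invertible :: "('a::comm_ring_1 \<Rightarrow> 'b::ab_group_add \<Rightarrow> 'b) \<Rightarrow> ('a \<times> 'b) set \<Rightarrow> bool" where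
  "idz_invertible scale L \<longleftrightarrow> idz_submodule scale L \<and>
     (\<exists>L'. idz_submodule scale L' \<and> idz_prod scale L L' = idz_base)"

definition idz_principal :: "('a::comm_ring_1 \<Rightarrow> 'b::ab_group_add \<Rightarrow> 'b) \<Rightarrow> 'a \<times> 'b \<Rightarrow> ('a \<times> 'b) set" where
  "idz_principal scale x = {idz_mult scale (a, 0) x | a. True}"

end

theory Submission
  imports Defs
begin

context module
begin

lemma mult_base: "idz_mult scale (a, 0) x = (a * fst x, a *s snd x)"
  by (simp add: idz_mult_def)

lemma principal_submodule: "idz_submodule scale (idz_principal scale x)"
  unfolding idz_submodule_def idz_principal_def
proof (intro conjI ballI allI)
  show "idz_zero \<in> {idz_mult scale (a, 0) x |a. True}"
    by (rule CollectI, rule exI[of _ 0]) (simp add: mult_base idz_zero_def)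
next
  fix y z assume "y \<in> {idz_mult scale (a, 0) x |a. True}" "z \<in> {idz_mult scale (a, 0) x |a. True}"
  then obtain a b where "y = idz_mult scale (a, 0) x" "z = idz_mult scale (b, 0) x" by blast
  then show "idz_add y z \<in> {idz_mult scale (a, 0) x |a. True}"
    by (intro CollectI exI[of _ "a+b"]) (simp add: mult_base idz_add_def algebra_simps)
next
  fix c y assume "y \<in> {idz_mult scale (a, 0) x |a. True}"
  then obtain a where "y = idz_mult scale (a, 0) x" by blast
  then show "idz_mult scale (c, 0) y \<in> {idz_mult scale (a, 0) x |a. True}"
    by (intro CollectI exI[of _ "c*a"]) (simp add: mult_base)
qed

lemma unit_invertible:
  assumes "idz_unit scale x"
  shows "idz_invertible scale (idz_principal scale x)"
proof -
  obtain u m where x: "x = (u, m)" by (cases x)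
  obtain y where "idz_mult scale x y = idz_one" using assms idz_unit_def by blast
  then have h1: "u * fst y = 1" and h2: "u *s snd y + fst y *s m = 0"
    by (simp_all add: x idz_mult_def idz_one_def)
  have "idz_prod scale (idz_principal scale x) (idz_principal scale y) = idz_base"
  proof
    show "idz_prod scale (idz_principal scale x) (idz_principal scale y) \<subseteq> idz_base"
    proof
      fix z assume "z \<in> idz_prod scale (idz_principal scale x) (idz_principal scale y)"
      then obtain n f g where fg: "\<forall>i<n. f i \<in> idz_principal scale x \<and> g i \<in> idz_principal scale y"
        and z: "z = idz_sum (\<lambda>i. idz_mult scale (f i) (g i)) n"
        unfolding idz_prod_def by blast
      have "\<forall>i<n. snd (idz_mult scale (f i) (g i)) = 0"
      proof (intro allI impI)
        fix i assume "i < n"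
        then obtain a b where "f i = idz_mult scale (a, 0) x" "g i = idz_mult scale (b, 0) y"
          using fg unfolding idz_principal_def by blast
        then have "snd (idz_mult scale (f i) (g i)) = (a*b) *s (u *s snd y + fst y *s m)"
          by (simp add: mult_base x idz_mult_def algebra_simps)
        then show "snd (idz_mult scale (f i) (g i)) = 0" using h2 by simp
      qed
      then have "snd z = 0" by (simp add: z idz_sum_def)
      then show "z \<in> idz_base" unfolding idz_base_def by (cases z) auto
    qed
  next
    show "idz_base \<subseteq> idz_prod scale (idz_principal scale x) (idz_principal scale y)"
    proof
      fix z assume "z \<in> (idz_base :: ('a \<times> 'b) set)"
      then obtain c where z: "z = (c, 0)" unfolding idz_base_def by blast
      let ?f = "\<lambda>i::nat. idz_mult scale (c, 0) x"
      let ?g = "\<lambda>i::nat. idz_mult scale (1, 0) y"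
      have c0: "(c * u) *s snd y + (fst y * c) *s m = 0"
      proof -
        have "(c * u) *s snd y + (fst y * c) *s m = c *s (u *s snd y + fst y *s m)"
          by (simp only: scale_right_distrib scale_scale mult.commute[of c "fst y"])
        then show ?thesis using h2 by simp
      qed
      have zeq: "z = idz_sum (\<lambda>i. idz_mult scale (?f i) (?g i)) 1"
      proof -
        have "c * u * fst y = c" using h1 by (simp add: mult.assoc)
        then show ?thesis using c0 by (simp add: z idz_sum_def mult_base x idz_mult_def)
      qed
      have mem: "\<forall>i<1. ?f i \<in> idz_principal scale x \<and> ?g i \<in> idz_principal scale y"
        unfolding idz_principal_def by blast
      show "z \<in> idz_prod scale (idz_principal scale x) (idz_principal scale y)"
        unfolding idz_prod_def
        by (rule CollectI, rule exI[of _ "1::nat"], rule exI[of _ ?f], rule exI[of _ ?g],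
            rule conjI[OF mem zeq])
    qed
  qed
  then show ?thesis using principal_submodule unfolding idz_invertible_def by blast
qed

lemma invertible_unit:
  assumes "idz_invertible scale L"
  shows "\<exists>x. idz_unit scale x \<and> L = idz_principal scale x"
proof -
  from assms have sub: "idz_submodule scale L" and "\<exists>L'. idz_prod scale L L' = idz_base"
    unfolding idz_invertible_def by auto
  then obtain L' where prod: "idz_prod scale L L' = idz_base" by blast
  have "(1, 0) \<in> (idz_base :: ('a \<times> 'b) set)" unfolding idz_base_def by blast
  then obtain n f g where fg: "\<forall>i<n. f i \<in> L \<and> g i \<in> L'"
    and one: "(1, 0) = idz_sum (\<lambda>i. idz_mult scale (f i) (g i)) n"
    unfolding prod[symmetric] idz_prod_def by blast
  have h1: "(\<Sum>i<n. fst (f i) * fst (g i)) = 1"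
    and h2: "(\<Sum>i<n. fst (f i) *s snd (g i) + fst (g i) *s snd (f i)) = 0"
    using one by (simp_all add: idz_sum_def idz_mult_def)
  define m0 where "m0 = (\<Sum>i<n. fst (g i) *s snd (f i))"
  define x where "x = ((1::'a), m0)"
  have ind: "k \<le> n \<Longrightarrow> ((\<Sum>i<k. fst (g i) * fst (f i)), (\<Sum>i<k. fst (g i) *s snd (f i))) \<in> L" for k
  proof (induction k)
    case 0
    then show ?case using sub unfolding idz_submodule_def idz_zero_def by simp
  next
    case (Suc k)
    then have a: "((\<Sum>i<k. fst (g i) * fst (f i)), (\<Sum>i<k. fst (g i) *s snd (f i))) \<in> L" by simp
    have "f k \<in> L" using Suc.prems fg by simp
    then have b: "idz_mult scale (fst (g k), 0) (f k) \<in> L" using sub unfolding idz_submodule_def by blast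
    have "idz_add ((\<Sum>i<k. fst (g i) * fst (f i)), (\<Sum>i<k. fst (g i) *s snd (f i)))
           (idz_mult scale (fst (g k), 0) (f k)) \<in> L"
      using a b sub unfolding idz_submodule_def by blast
    then show ?case by (simp add: idz_add_def mult_base)
  qed
  have xL: "x \<in> L"
    using ind[of n] h1 by (simp add: x_def m0_def mult.commute)
  have unit: "idz_unit scale x"
    unfolding idz_unit_def
    by (rule exI[of _ "(1, - m0)"]) (simp add: x_def idz_mult_def idz_one_def)
  have Leq: "L = idz_principal scale x"
  proof
    show "idz_principal scale x \<subseteq> L"
      using xL sub unfolding idz_principal_def idz_submodule_def by blast
  next
    show "L \<subseteq> idz_principal scale x"
    proof
      fix z assume zL: "z \<in> L"
      obtain a m where z: "z = (a, m)" by (cases z)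
      have key: "a *s snd (g i) + fst (g i) *s m = 0" if "i < n" for i
      proof -
        have "idz_mult scale z (g i) \<in> idz_prod scale L L'"
          unfolding idz_prod_def
          apply (rule CollectI)
          apply (rule exI[of _ 1], rule exI[of _ "\<lambda>_. z"], rule exI[of _ "\<lambda>_. g i"])
          using zL fg that by (simp add: idz_sum_def)
        then have "idz_mult scale z (g i) \<in> idz_base" using prod by simp
        then show ?thesis unfolding idz_base_def by (auto simp: z idz_mult_def)
      qed
      have "m = (\<Sum>i<n. fst (f i) * fst (g i)) *s m" using h1 by simp
      also have "\<dots> = (\<Sum>i<n. fst (f i) *s (fst (g i) *s m))"
        by (simp add: scale_sum_left)
      also have "\<dots> = (\<Sum>i<n. fst (f i) *s (- (a *s snd (g i))))"
      proof (rule sum.cong[OF refl])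
        fix i assume "i \<in> {..<n}"
        then have "fst (g i) *s m = - (a *s snd (g i))"
        proof -
          have "a *s snd (g i) + fst (g i) *s m = 0" using key \<open>i \<in> {..<n}\<close> by simp
          then have "fst (g i) *s m + a *s snd (g i) = 0" by (simp only: add.commute)
          then show ?thesis by (simp only: eq_neg_iff_add_eq_0)
        qed
        then show "fst (f i) *s (fst (g i) *s m) = fst (f i) *s (- (a *s snd (g i)))" by simp
      qed
      also have "\<dots> = - (a *s (\<Sum>i<n. fst (f i) *s snd (g i)))"
        by (simp add: scale_sum_right sum_negf mult.commute)
      also have "(\<Sum>i<n. fst (f i) *s snd (g i)) = - m0"
        using h2 by (simp add: sum.distrib m0_def eq_neg_iff_add_eq_0)
      finally have "m = a *s m0" by simp
      then have "z = idz_mult scale (a, 0) x" by (simp add: z x_def mult_base)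
      then show "z \<in> idz_principal scale x" unfolding idz_principal_def by blast
    qed
  qed
  show ?thesis by (rule exI[of _ x], rule conjI[OF unit Leq])
qed

end

theorem corollary5p12:
  fixes scale :: "'a::comm_ring_1 \<Rightarrow> 'b::ab_group_add \<Rightarrow> 'b"
  assumes "module scale"
  shows "{L. idz_invertible scale L} = {idz_principal scale x | x. idz_unit scale x}"
proof (intro set_eqI iffI)
  fix L assume "L \<in> {L. idz_invertible scale L}"
  then have "idz_invertible scale L" by simp
  from module.invertible_unit[OF assms this]
  obtain x where "idz_unit scale x" "L = idz_principal scale x" by blast
  then show "L \<in> {idz_principal scale x | x. idz_unit scale x}" by (intro CollectI exI[of _ x] conjI) auto
next
  fix L assume "L \<in> {idz_principal scale x | x. idz_unit scale x}"
  then obtain x where "idz_unit scale x" "L = idz_principal scale x" by auto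
  then show "L \<in> {L. idz_invertible scale L}"
    using module.unit_invertible[OF assms \<open>idz_unit scale x\<close>] by simp
qed

end
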